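(* Let $j\in\mathbb{N}$, $r\in\mathbb{N}_0$, and let $n=p_1^{a_1}\cdots p_t^{a_t}$ with $t\in\mathbb{N}$, distinct primes $p_1,\dots,p_t$ and $a_1,\dots,a_t\in\mathbb{N}$. Then \[\frac{c_j^{(r)}(n)}{d_{j+r}(n)}=\sum_{i=0}^{j}(-1)^i\binom{j}{i}\frac{\binom{j+r-1}{i}^t}{\prod_{k=1}^t\binom{a_k+j+r-1}{i}}={}_{t+1}F_t\big(\underbrace{1-j-r,\dots,1-j-r}_{t},\,-j;\ 1-a_1-j-r,\dots,1-a_t-j-r;\ 1\big).\] Moreover, if $r\ge 1$, \[\frac{c_j^{(r)}(n)}{d_r(n)}=\sum_{i=0}^{j}(-1)^{j-i}\binom{j}{i}\frac{\prod_{k=1}^t\binom{a_k+i+r-1}{i}}{\binom{i+r-1}{i}^t}=(-1)^j\,{}_{t+1}F_t\big(a_1+r,\dots,a_t+r,\,-j;\ \underbrace{r,\dots,r}_{t};\ 1\big).\]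
   Context: For $j,n\in\mathbb{N}$, $d_j(n)$ is the number of ordered $j$-tuples of positive integers with product $n$, and $c_j(n)$ is the number of ordered $j$-tuples of integers each $\ge 2$ with product $n$. The associated divisor functions are defined by $c_j^{(0)}=c_j$ and $c_j^{(r)}(n)=\sum_{m\mid n}c_j^{(r-1)}(m)$ for $r,n\in\mathbb{N}$. The generalised hypergeometric series is ${}_{p}F_q(\alpha_1,\dots,\alpha_p;\beta_1,\dots,\beta_q;z)=\sum_{i=0}^\infty\frac{\alpha_1^{\overline i}\cdots\alpha_p^{\overline i}z^i}{\beta_1^{\overline i}\cdots\beta_q^{\overline i}\,i!}$ with rising factorial $x^{\overline i}=\prod_{l=0}^{i-1}(x+l)$, $x^{\overline 0}=1$; the series above terminate after the term $i=j$ because $(-j)^{\overline i}=0$ for $i>j$. *)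

theory Defs
  imports Complex_Main "HOL-Computational_Algebra.Primes"
begin

definition d_fun :: "nat \<Rightarrow> nat \<Rightarrow> nat" where
  "d_fun j n = card {xs :: nat list. length xs = j \<and> (\<forall>x\<in>set xs. x \<ge> 1) \<and> prod_list xs = n}"

definition c_fun :: "nat \<Rightarrow> nat \<Rightarrow> nat" where
  "c_fun j n = card {xs :: nat list. length xs = j \<and> (\<forall>x\<in>set xs. x \<ge> 2) \<and> prod_list xs = n}"

fun c_iter :: "nat \<Rightarrow> nat \<Rightarrow> nat \<Rightarrow> nat" where
  "c_iter 0 j n = c_fun j n"
| "c_iter (Suc r) j n = (\<Sum>m\<in>{m. m dvd n}. c_iter r j m)"

definition hypergeom :: "real list \<Rightarrow> real list \<Rightarrow> real \<Rightarrow> real" where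
  "hypergeom as bs z =
     (\<Sum>i. (\<Prod>a\<leftarrow>as. pochhammer a i) * z ^ i / ((\<Prod>b\<leftarrow>bs. pochhammer b i) * fact i))"

end

theory Submission imports Defs "HOL-Library.FuncSet" begin


definition LS :: "nat \<Rightarrow> nat \<Rightarrow> nat \<Rightarrow> nat list set" where
  "LS lo m n = {xs. length xs = m \<and> (\<forall>x\<in>set xs. x \<ge> lo) \<and> prod_list xs = n}"

lemma LS_finite: assumes "n > 0" shows "finite (LS lo m n)"
proof (rule finite_subset)
  show "LS lo m n \<subseteq> {xs. set xs \<subseteq> {..n} \<and> length xs = m}"
  proof
    fix xs assume "xs \<in> LS lo m n"
    then have "length xs = m" "prod_list xs = n" by (auto simp: LS_def)
    moreover have "x \<le> n" if "x \<in> set xs" for x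
      using prod_list_dvd[OF that] \<open>prod_list xs = n\<close> assms by (auto intro: dvd_imp_le)
    ultimately show "xs \<in> {xs. set xs \<subseteq> {..n} \<and> length xs = m}" by auto
  qed
  show "finite {xs. set xs \<subseteq> {..n} \<and> length xs = m}"
    by (rule finite_lists_length_eq) simp
qed

lemma LS_0: "LS lo 0 n = (if n = 1 then {[]} else {})"
  by (auto simp: LS_def)

lemma LS_Suc:
  assumes "n > 0"
  shows "LS lo (Suc m) n = (\<Union>x\<in>{x. x dvd n \<and> n div x \<ge> lo}. (\<lambda>ys. (n div x) # ys) ` LS lo m x)"
proof (intro equalityI subsetI)
  fix xs assume "xs \<in> LS lo (Suc m) n"
  then obtain y ys where xs: "xs = y # ys" and l: "length ys = m" and y: "y \<ge> lo"
     and ys: "\<forall>x\<in>set ys. x \<ge> lo" and p: "y * prod_list ys = n"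
    by (cases xs) (auto simp: LS_def)
  have "prod_list ys > 0" using p assms by (cases "prod_list ys = 0") auto
  then have "n div prod_list ys = y" by (simp flip: p)
  show "xs \<in> (\<Union>x\<in>{x. x dvd n \<and> n div x \<ge> lo}. (\<lambda>ys. (n div x) # ys) ` LS lo m x)"
  proof (rule UN_I[of "prod_list ys"])
    show "prod_list ys \<in> {x. x dvd n \<and> n div x \<ge> lo}" using \<open>n div prod_list ys = y\<close> y p by (auto intro: dvdI[of _ _ y] simp: mult.commute)
    show "xs \<in> (\<lambda>zs. (n div prod_list ys) # zs) ` LS lo m (prod_list ys)"
      using xs l ys \<open>n div prod_list ys = y\<close> by (auto simp: LS_def)
  qed
next
  fix xs assume "xs \<in> (\<Union>x\<in>{x. x dvd n \<and> n div x \<ge> lo}. (\<lambda>ys. (n div x) # ys) ` LS lo m x)"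
  then obtain x ys where "x dvd n" "n div x \<ge> lo" "ys \<in> LS lo m x" "xs = (n div x) # ys" by auto
  then show "xs \<in> LS lo (Suc m) n" by (auto simp: LS_def)
qed

lemma card_LS_Suc:
  assumes "n > 0"
  shows "card (LS lo (Suc m) n) = (\<Sum>x\<in>{x. x dvd n \<and> n div x \<ge> lo}. card (LS lo m x))"
proof -
  have fin: "finite {x. x dvd n \<and> n div x \<ge> lo}"
    by (rule finite_subset[of _ "{..n}"]) (auto intro: dvd_imp_le simp: assms)
  have "card (LS lo (Suc m) n) = (\<Sum>x\<in>{x. x dvd n \<and> n div x \<ge> lo}. card ((\<lambda>ys. (n div x) # ys) ` LS lo m x))"
    unfolding LS_Suc[OF assms]
  proof (rule card_UN_disjoint[OF fin])
    show "\<forall>i\<in>{x. x dvd n \<and> lo \<le> n div x}. finite ((#) (n div i) ` LS lo m i)"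
      using assms by (auto intro!: LS_finite dest: dvd_pos_nat)
    show "\<forall>i\<in>{x. x dvd n \<and> lo \<le> n div x}. \<forall>j\<in>{x. x dvd n \<and> lo \<le> n div x}.
       i \<noteq> j \<longrightarrow> (#) (n div i) ` LS lo m i \<inter> (#) (n div j) ` LS lo m j = {}"
      by (auto simp: LS_def)
  qed
  also have "\<dots> = (\<Sum>x\<in>{x. x dvd n \<and> n div x \<ge> lo}. card (LS lo m x))"
    by (intro sum.cong refl card_image) auto
  finally show ?thesis .
qed

lemma d_fun_LS: "d_fun j n = card (LS 1 j n)" by (simp add: d_fun_def LS_def)
lemma c_fun_LS: "c_fun j n = card (LS 2 j n)" by (simp add: c_fun_def LS_def)

lemma d_fun_0: "d_fun 0 n = (if n = 1 then 1 else 0)"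
  by (simp add: d_fun_LS LS_0)
lemma c_fun_0: "c_fun 0 n = (if n = 1 then 1 else 0)"
  by (simp add: c_fun_LS LS_0)

lemma d_fun_Suc: assumes "n > 0" shows "d_fun (Suc m) n = (\<Sum>x\<in>{x. x dvd n}. d_fun m x)"
proof -
  have "{x. x dvd n \<and> n div x \<ge> 1} = {x. x dvd n}"
    using assms by (auto simp: Suc_le_eq dest: dvd_pos_nat)
  then show ?thesis by (simp add: d_fun_LS card_LS_Suc[OF assms])
qed

lemma c_fun_Suc: assumes "n > 0"
  shows "real (c_fun (Suc m) n) = (\<Sum>x\<in>{x. x dvd n}. real (c_fun m x)) - real (c_fun m n)"
proof -
  have fin: "finite {x. x dvd n}" using assms by (simp add: finite_divisors_nat)
  have "{x. x dvd n \<and> n div x \<ge> 2} = {x. x dvd n} - {n}"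
  proof (intro equalityI subsetI)
    fix x assume "x \<in> {x. x dvd n \<and> n div x \<ge> 2}" then show "x \<in> {x. x dvd n} - {n}"
      using assms by auto
  next
    fix x assume x: "x \<in> {x. x dvd n} - {n}"
    then obtain k where k: "n = x * k" by auto
    with assms x have "k \<noteq> 0" "k \<noteq> 1" "x > 0" by auto
    then show "x \<in> {x. x dvd n \<and> n div x \<ge> 2}" using k by auto
  qed
  then have "c_fun (Suc m) n = (\<Sum>x\<in>{x. x dvd n} - {n}. c_fun m x)"
    by (simp add: c_fun_LS card_LS_Suc[OF assms])
  then show ?thesis using fin by (simp add: sum_diff1 of_nat_diff)
qed


lemma pascal_step:
  fixes f :: "nat \<Rightarrow> real"
  shows "(\<Sum>i\<le>j. (-1)^i * real (j choose i) * f i) - (\<Sum>i\<le>j. (-1)^i * real (j choose i) * f (Suc i))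
       = (\<Sum>i\<le>Suc j. (-1)^i * real (Suc j choose i) * f i)"
proof -
  have A: "(\<Sum>i\<le>Suc j. (-1)^i * real (j choose i) * f i) = (\<Sum>i\<le>j. (-1)^i * real (j choose i) * f i)"
    by simp
  have B: "(\<Sum>i\<le>j. (-1)^i * real (j choose i) * f i)
      = f 0 - (\<Sum>i\<le>j. (-1)^i * real (j choose Suc i) * f (Suc i))"
  proof -
    have "(\<Sum>i\<le>Suc j. (-1)^i * real (j choose i) * f i)
      = f 0 + (\<Sum>i\<le>j. (-1)^(Suc i) * real (j choose Suc i) * f (Suc i))"
      by (subst sum.atMost_Suc_shift) simp
    then show ?thesis using A by (simp add: sum_negf)
  qed
  have C: "(\<Sum>i\<le>Suc j. (-1)^i * real (Suc j choose i) * f i)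
      = f 0 - (\<Sum>i\<le>j. (-1)^i * real (j choose i) * f (Suc i))
            - (\<Sum>i\<le>j. (-1)^i * real (j choose Suc i) * f (Suc i))"
    by (subst sum.atMost_Suc_shift) (simp add: ring_distribs sum.distrib sum_subtractf sum_negf)
  show ?thesis using B C by linarith
qed

lemma c_fun_formula:
  assumes "n > 0"
  shows "real (c_fun j n) = (-1)^j * (\<Sum>i\<le>j. (-1)^i * real (j choose i) * real (d_fun i n))"
  using assms
proof (induction j arbitrary: n)
  case 0
  then show ?case by (simp add: c_fun_0 d_fun_0)
next
  case (Suc j)
  have fin: "finite {x. x dvd n}" using Suc.prems by (simp add: finite_divisors_nat)
  have pos: "x > 0" if "x \<in> {x. x dvd n}" for x using that Suc.prems by (auto intro: dvd_pos_nat)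
  have "real (c_fun (Suc j) n) = (\<Sum>x\<in>{x. x dvd n}. real (c_fun j x)) - real (c_fun j n)"
    by (rule c_fun_Suc[OF Suc.prems])
  also have "(\<Sum>x\<in>{x. x dvd n}. real (c_fun j x))
     = (\<Sum>x\<in>{x. x dvd n}. (-1)^j * (\<Sum>i\<le>j. (-1)^i * real (j choose i) * real (d_fun i x)))"
    by (intro sum.cong refl Suc.IH pos)
  also have "\<dots> = (-1)^j * (\<Sum>i\<le>j. (-1)^i * real (j choose i) * (\<Sum>x\<in>{x. x dvd n}. real (d_fun i x)))"
    by (simp add: sum_distrib_left sum.swap[of _ "{x. x dvd n}"] mult.assoc)
  also have "\<dots> = (-1)^j * (\<Sum>i\<le>j. (-1)^i * real (j choose i) * real (d_fun (Suc i) n))"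
    by (simp add: d_fun_Suc[OF Suc.prems])
  also have "real (c_fun j n) = (-1)^j * (\<Sum>i\<le>j. (-1)^i * real (j choose i) * real (d_fun i n))"
    by (rule Suc.IH[OF Suc.prems])
  finally have "real (c_fun (Suc j) n) = (-1)^Suc j * ((\<Sum>i\<le>j. (-1)^i * real (j choose i) * real (d_fun i n))
        - (\<Sum>i\<le>j. (-1)^i * real (j choose i) * real (d_fun (Suc i) n)))"
    by (simp add: algebra_simps)
  then show ?case using pascal_step[of j "\<lambda>i. real (d_fun i n)"] by simp
qed

lemma c_iter_formula:
  assumes "n > 0"
  shows "real (c_iter r j n) = (-1)^j * (\<Sum>i\<le>j. (-1)^i * real (j choose i) * real (d_fun (i + r) n))"
  using assms
proof (induction r arbitrary: n)
  case 0
  then show ?case by (simp add: c_fun_formula)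
next
  case (Suc r)
  have pos: "x > 0" if "x \<in> {x. x dvd n}" for x using that Suc.prems by (auto intro: dvd_pos_nat)
  have "real (c_iter (Suc r) j n) = (\<Sum>x\<in>{x. x dvd n}. real (c_iter r j x))" by simp
  also have "\<dots> = (\<Sum>x\<in>{x. x dvd n}. (-1)^j * (\<Sum>i\<le>j. (-1)^i * real (j choose i) * real (d_fun (i + r) x)))"
    by (intro sum.cong refl Suc.IH pos)
  also have "\<dots> = (-1)^j * (\<Sum>i\<le>j. (-1)^i * real (j choose i) * (\<Sum>x\<in>{x. x dvd n}. real (d_fun (i + r) x)))"
    by (simp add: sum_distrib_left sum.swap[of _ "{x. x dvd n}"] mult.assoc)
  also have "\<dots> = (-1)^j * (\<Sum>i\<le>j. (-1)^i * real (j choose i) * real (d_fun (i + Suc r) n))"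
    by (simp add: d_fun_Suc[OF Suc.prems])
  finally show ?case .
qed


lemma hockey: "(\<Sum>e\<le>A. (e + m - 1) choose e) = (A + m) choose A"
proof (cases m)
  case 0
  have "(\<Sum>e\<le>A. (e + m - 1) choose e) = (\<Sum>e\<in>{0}. (e + m - 1) choose e)"
    using 0 by (intro sum.mono_neutral_right) auto
  then show ?thesis using 0 by simp
next
  case (Suc m')
  then show ?thesis using sum_choose_lower[of m' A] by (simp add: add.commute)
qed

lemma divisor_sum_prod:
  fixes n :: nat and g :: "nat \<Rightarrow> nat \<Rightarrow> 'a::comm_semiring_1"
  assumes "n > 0"
  shows "(\<Sum>x\<in>{x. x dvd n}. \<Prod>p\<in>prime_factors n. g p (multiplicity p x))
       = (\<Prod>p\<in>prime_factors n. \<Sum>e\<le>multiplicity p n. g p e)"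
proof -
  define P where "P = prime_factors n"
  have finP: "finite P" by (simp add: P_def)
  have primeP: "\<And>p. p \<in> P \<Longrightarrow> prime p" by (auto simp: P_def)
  have "(\<Prod>p\<in>P. \<Sum>e\<le>multiplicity p n. g p e)
      = (\<Sum>f\<in>PiE P (\<lambda>p. {..multiplicity p n}). \<Prod>p\<in>P. g p (f p))"
    by (rule prod_sum_PiE) (simp_all add: finP)
  also have "\<dots> = (\<Sum>x\<in>{x. x dvd n}. \<Prod>p\<in>P. g p (multiplicity p x))"
  proof (rule sum.reindex_bij_witness[where i = "\<lambda>x. restrict (\<lambda>p. multiplicity p x) P"
                                        and j = "\<lambda>f. \<Prod>p\<in>P. p ^ f p"])
    fix f assume f: "f \<in> PiE P (\<lambda>p. {..multiplicity p n})"
    have mult: "multiplicity q (\<Prod>p\<in>P. p ^ f p) = (if q \<in> P then f q else 0)" if "prime q" for q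
      by (rule multiplicity_prod_prime_powers[OF finP primeP that])
    show "restrict (\<lambda>p. multiplicity p (\<Prod>p\<in>P. p ^ f p)) P = f"
    proof (rule ext)
      fix q show "restrict (\<lambda>p. multiplicity p (\<Prod>p\<in>P. p ^ f p)) P q = f q"
      proof (cases "q \<in> P")
        case True then show ?thesis using mult[OF primeP[OF True]] by simp
      next
        case False then show ?thesis using f by (auto simp: PiE_def extensional_def)
      qed
    qed
    have nz: "(\<Prod>p\<in>P. p ^ f p) \<noteq> 0" using primeP finP
      by (subst prod_zero_iff) (auto dest: primeP)
    show "(\<Prod>p\<in>P. p ^ f p) \<in> {x. x dvd n}"
    proof (simp, rule multiplicity_le_imp_dvd[OF nz])
      fix q :: nat assume q: "prime q"
      show "multiplicity q (\<Prod>p\<in>P. p ^ f p) \<le> multiplicity q n"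
        using mult[OF q] f by (auto simp: PiE_def Pi_def)
    qed
    show "(\<Prod>p\<in>P. g p (multiplicity p (\<Prod>p\<in>P. p ^ f p)))
          = (\<Prod>p\<in>P. g p (f p))"
      using mult primeP by (intro prod.cong refl) auto
  next
    fix x assume x: "x \<in> {x. x dvd n}"
    then have x0: "x \<noteq> 0" using assms by auto
    show "restrict (\<lambda>p. multiplicity p x) P \<in> PiE P (\<lambda>p. {..multiplicity p n})"
      using x assms by (auto intro: dvd_imp_multiplicity_le)
    have nz: "(\<Prod>p\<in>P. p ^ multiplicity p x) \<noteq> 0" using primeP finP
      by (subst prod_zero_iff) (auto dest: primeP)
    have "normalize (\<Prod>p\<in>P. p ^ restrict (\<lambda>p. multiplicity p x) P p) = normalize x"
    proof (rule multiplicity_eq_imp_eq)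
      show "(\<Prod>p\<in>P. p ^ restrict (\<lambda>p. multiplicity p x) P p) \<noteq> 0" using nz by simp
      show "x \<noteq> 0" by (rule x0)
      fix q :: nat assume q: "prime q"
      have "multiplicity q (\<Prod>p\<in>P. p ^ restrict (\<lambda>p. multiplicity p x) P p) = (if q \<in> P then multiplicity q x else 0)"
        by (subst multiplicity_prod_prime_powers[OF finP primeP q]) auto
      also have "\<dots> = multiplicity q x"
      proof (cases "q \<in> P")
        case False
        then have "\<not> q dvd n" using q assms by (auto simp: P_def prime_factors_dvd)
        then have "\<not> q dvd x" using x by (auto intro: dvd_trans)
        then show ?thesis using False by (simp add: not_dvd_imp_multiplicity_0)
      qed simp
      finally show "multiplicity q (\<Prod>p\<in>P. p ^ restrict (\<lambda>p. multiplicity p x) P p) = multiplicity q x" .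
    qed
    then show "(\<Prod>p\<in>P. p ^ restrict (\<lambda>p. multiplicity p x) P p) = x" by simp
  qed
  finally show ?thesis by (simp add: P_def)
qed

lemma d_fun_formula:
  assumes "n > 0"
  shows "d_fun m n = (\<Prod>p\<in>prime_factors n. (multiplicity p n + m - 1) choose multiplicity p n)"
  using assms
proof (induction m arbitrary: n)
  case 0
  show ?case
  proof (cases "n = 1")
    case True then show ?thesis by (simp add: d_fun_0)
  next
    case False
    then obtain p where p: "p \<in> prime_factors n"
      using 0 by (metis prime_factor_nat prime_factorsI not_gr0)
    then have "multiplicity p n > 0" by (simp add: prime_factors_multiplicity)
    then have "(\<Prod>p\<in>prime_factors n. (multiplicity p n + 0 - 1) choose multiplicity p n) = 0"
      using p by (intro prod_zero bexI[OF _ p]) simp_all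
    then show ?thesis using False by (simp add: d_fun_0)
  qed
next
  case (Suc m)
  have "d_fun (Suc m) n = (\<Sum>x\<in>{x. x dvd n}. d_fun m x)" by (rule d_fun_Suc[OF Suc.prems])
  also have "\<dots> = (\<Sum>x\<in>{x. x dvd n}. \<Prod>p\<in>prime_factors n. (multiplicity p x + m - 1) choose multiplicity p x)"
  proof (intro sum.cong refl)
    fix x assume x: "x \<in> {x. x dvd n}"
    then have x0: "x > 0" using Suc.prems by (auto intro: dvd_pos_nat)
    have sub: "prime_factors x \<subseteq> prime_factors n"
      using x Suc.prems x0 by (auto simp: in_prime_factors_iff intro: dvd_trans)
    have "d_fun m x = (\<Prod>p\<in>prime_factors x. (multiplicity p x + m - 1) choose multiplicity p x)"
      by (rule Suc.IH[OF x0])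
    also have "\<dots> = (\<Prod>p\<in>prime_factors n. (multiplicity p x + m - 1) choose multiplicity p x)"
    proof (rule prod.mono_neutral_left[OF _ sub])
      show "finite (prime_factors n)" by simp
      show "\<forall>i\<in>prime_factors n - prime_factors x. (multiplicity i x + m - 1) choose multiplicity i x = 1"
        by (auto simp: prime_factors_multiplicity)
    qed
    finally show "d_fun m x = \<dots>" .
  qed
  also have "\<dots> = (\<Prod>p\<in>prime_factors n. \<Sum>e\<le>multiplicity p n. (e + m - 1) choose e)"
    by (rule divisor_sum_prod[OF Suc.prems])
  also have "\<dots> = (\<Prod>p\<in>prime_factors n. (multiplicity p n + Suc m - 1) choose multiplicity p n)"
    by (intro prod.cong refl, subst hockey) simp
  finally show ?case .
qed


lemma d_fun_specific:
  fixes t n :: nat and p a :: "nat \<Rightarrow> nat"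
  assumes pr: "\<And>k. k \<in> {1..t} \<Longrightarrow> prime (p k)"
    and inj: "inj_on p {1..t}"
    and a1: "\<And>k. k \<in> {1..t} \<Longrightarrow> a k \<ge> 1"
    and n: "n = (\<Prod>k=1..t. p k ^ a k)"
  shows "n > 0" "d_fun m n = (\<Prod>k=1..t. (a k + m - 1) choose a k)"
proof -
  define S where "S = p ` {1..t}"
  define f where "f = (\<lambda>q. a (the_inv_into {1..t} p q))"
  have finS: "finite S" by (simp add: S_def)
  have primeS: "\<And>q. q \<in> S \<Longrightarrow> prime q" using pr by (auto simp: S_def)
  have fp: "f (p k) = a k" if "k \<in> {1..t}" for k
    using the_inv_into_f_f[OF inj that] by (simp add: f_def)
  have nS: "n = (\<Prod>q\<in>S. q ^ f q)"
    unfolding n S_def by (subst prod.reindex[OF inj]) (auto simp: fp intro!: prod.cong)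
  show "n > 0" unfolding nS by (intro prod_pos) (simp add: primeS prime_gt_0_nat)
  have mult: "multiplicity q n = (if q \<in> S then f q else 0)" if "prime q" for q
    unfolding nS by (rule multiplicity_prod_prime_powers[OF finS primeS that])
  have fpos: "f q > 0" if "q \<in> S" for q
  proof -
    from that obtain k where k: "k \<in> {1..t}" "q = p k" by (auto simp: S_def)
    then show ?thesis using fp[OF k(1)] a1[OF k(1)] by simp
  qed
  have pf: "prime_factors n = S"
    unfolding prime_factors_multiplicity using mult primeS fpos by (auto split: if_splits)
  have "d_fun m n = (\<Prod>q\<in>S. (multiplicity q n + m - 1) choose multiplicity q n)"
    using d_fun_formula[OF \<open>n > 0\<close>] pf by simp
  also have "\<dots> = (\<Prod>q\<in>S. (f q + m - 1) choose f q)"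
    using mult primeS by (intro prod.cong refl) auto
  also have "\<dots> = (\<Prod>k=1..t. (a k + m - 1) choose a k)"
    unfolding S_def by (subst prod.reindex[OF inj]) (auto simp: fp intro!: prod.cong)
  finally show "d_fun m n = (\<Prod>k=1..t. (a k + m - 1) choose a k)" .
qed

lemma sym_choose: "(x + y) choose x = (x + y) choose (y::nat)"
  using binomial_symmetric[of x "x+y"] by simp

lemma ratio1_nat:
  fixes a N i :: nat
  assumes "i \<le> N" "N \<ge> 1" "a \<ge> 1"
  shows "((a + (N - i) - 1) choose a) * ((a + N - 1) choose i) = ((N - 1) choose i) * ((a + N - 1) choose a)"
proof (cases "i = N")
  case True
  then show ?thesis using assms by (simp add: binomial_eq_0)
next
  case False
  define M where "M = N - 1"
  have iM: "i \<le> M" using assms False by (simp add: M_def)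
  have e1: "a + (N - i) - 1 = a + (M - i)" "a + N - 1 = a + M" "N - 1 = M" using assms iM by (auto simp: M_def)
  have L1: "((a + (M - i) + i) choose (a + i)) * ((a + i) choose i) = ((a + (M - i) + i) choose i) * ((a + (M - i)) choose a)"
    by (rule choose_mult_lemma)
  have L2: "((i + (M - i) + a) choose (i + a)) * ((i + a) choose a) = ((i + (M - i) + a) choose a) * ((i + (M - i)) choose i)"
    by (rule choose_mult_lemma)
  have s: "(a + i) choose i = (a + i) choose a"
    by (rule sym_choose[symmetric])
  have "a + (M - i) + i = a + M" "i + (M - i) + a = a + M" "i + (M - i) = M" using iM by auto
  then show ?thesis using L1 L2 s unfolding e1 by (simp add: add.commute mult.commute)
qed

lemma ratio2_nat:
  fixes a r i :: nat
  assumes "r \<ge> 1"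
  shows "((a + i + r - 1) choose a) * ((i + r - 1) choose i) = ((a + i + r - 1) choose i) * ((a + r - 1) choose a)"
proof -
  define R where "R = r - 1"
  have e: "a + i + r - 1 = R + a + i" "i + r - 1 = R + i" "a + r - 1 = R + a" using assms by (auto simp: R_def)
  have L: "((R + a + i) choose (R + i)) * ((R + i) choose i) = ((R + a + i) choose i) * ((R + a) choose R)"
    by (rule choose_mult_lemma)
  have s1: "(R + a + i) choose (R + i) = (R + a + i) choose a"
    using sym_choose[of "R + i" a] by (simp add: ac_simps)
  have s2: "(R + a) choose R = (R + a) choose a"
    by (rule sym_choose)
  show ?thesis unfolding e using L s1 s2 by simp
qed



lemma real_ratio1:
  fixes a N i :: nat
  assumes "i \<le> N" "N \<ge> 1" "a \<ge> 1"
  shows "real ((a + (N - i) - 1) choose a) / real ((a + N - 1) choose a)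
       = real ((N - 1) choose i) / real ((a + N - 1) choose i)"
proof -
  have nz1: "real ((a + N - 1) choose a) \<noteq> 0" using assms by simp
  have nz2: "real ((a + N - 1) choose i) \<noteq> 0" using assms by simp
  have "real ((a + (N - i) - 1) choose a) * real ((a + N - 1) choose i)
      = real ((N - 1) choose i) * real ((a + N - 1) choose a)"
    using ratio1_nat[OF assms] by (simp flip: of_nat_mult)
  then show ?thesis using nz1 nz2 by (simp add: frac_eq_eq)
qed

lemma real_ratio2:
  fixes a r i :: nat
  assumes "r \<ge> 1"
  shows "real ((a + (i + r) - 1) choose a) / real ((a + r - 1) choose a)
       = real ((a + i + r - 1) choose i) / real ((i + r - 1) choose i)"
proof -
  have nz1: "real ((a + r - 1) choose a) \<noteq> 0" using assms by simp
  have nz2: "real ((i + r - 1) choose i) \<noteq> 0" using assms by simp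
  have "real ((a + i + r - 1) choose a) * real ((i + r - 1) choose i)
      = real ((a + i + r - 1) choose i) * real ((a + r - 1) choose a)"
    using ratio2_nat[OF assms] by (simp flip: of_nat_mult)
  then show ?thesis using nz1 nz2 by (simp add: frac_eq_eq ac_simps)
qed

lemma sign1: "i \<le> j \<Longrightarrow> (-1::real)^j * (-1)^(j-i) = (-1)^i"
proof -
  assume "i \<le> j"
  then obtain d where j: "j = i + d" using le_Suc_ex by blast
  have "(-1::real)^d * (-1)^d = 1" by (simp flip: power_mult_distrib)
  then show ?thesis unfolding j by (simp add: power_add mult.assoc)
qed

lemma sign2: "i \<le> j \<Longrightarrow> (-1::real)^j * (-1)^i = (-1)^(j-i)"
proof -
  assume "i \<le> j"
  then obtain d where j: "j = i + d" using le_Suc_ex by blast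
  have "(-1::real)^i * (-1)^i = 1" by (simp flip: power_mult_distrib)
  then show ?thesis unfolding j by (simp add: power_add mult_ac)
qed

lemma poch_neg: "pochhammer (- real m) i = (-1)^i * fact i * real (m choose i)"
proof -
  have h1: "real (m choose i) = real m gchoose i" by (rule binomial_gbinomial)
  have "real (m choose i) = (-1)^i * pochhammer (- real m) i / fact i"
    unfolding h1 by (rule gbinomial_pochhammer)
  then have h2: "fact i * real (m choose i) = (-1)^i * pochhammer (- real m) i" by (simp add: field_simps)
  have s: "(-1::real)^i * (-1)^i = 1" by (simp flip: power_mult_distrib)
  have "(-1)^i * fact i * real (m choose i) = ((-1)^i * (-1)^i) * pochhammer (- real m) i"
    using h2 by (simp add: mult.assoc)
  then show ?thesis using s by simp
qed

lemma poch_pos: assumes "x \<ge> 1" shows "pochhammer (real x) i = fact i * real ((x + i - 1) choose i)"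
proof -
  have e: "real (x + i - 1) - real i + 1 = real x" using assms by (simp add: of_nat_diff)
  have h1: "real ((x + i - 1) choose i) = real (x + i - 1) gchoose i" by (rule binomial_gbinomial)
  have "real (x + i - 1) gchoose i = pochhammer (real (x + i - 1) - of_nat i + 1) i / fact i"
    by (rule gbinomial_pochhammer')
  then have "real ((x + i - 1) choose i) = pochhammer (real x) i / fact i"
    unfolding h1 by (simp only: e)
  then show ?thesis by (simp add: field_simps)
qed

lemma prod_list_upt_real: "prod_list (map h [1..<t+1]) = (\<Prod>k=1..t. (h k :: real))"
proof -
  have "prod h (set [1..<t+1]) = prod_list (map h [1..<t+1])"
    by (rule prod.distinct_set_conv_list) simp
  then have "prod_list (map h [1..<t+1]) = prod h (set [1..<t+1])" by simp
  also have "set [1..<t+1] = {1..t}" by auto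
  finally show ?thesis .
qed



theorem theorem2:
  fixes j r t n :: nat and p a :: "nat \<Rightarrow> nat"
  assumes "j \<ge> 1" and "t \<ge> 1"
    and "\<And>k. k \<in> {1..t} \<Longrightarrow> prime (p k)"
    and "inj_on p {1..t}"
    and "\<And>k. k \<in> {1..t} \<Longrightarrow> a k \<ge> 1"
    and "n = (\<Prod>k=1..t. p k ^ a k)"
  shows "real (c_iter r j n) / real (d_fun (j + r) n)
           = (\<Sum>i=0..j. (-1) ^ i * real (j choose i) * real ((j + r - 1) choose i) ^ t
                 / (\<Prod>k=1..t. real ((a k + j + r - 1) choose i)))
       \<and> real (c_iter r j n) / real (d_fun (j + r) n)
           = hypergeom (replicate t (1 - real j - real r) @ [- real j])
                       (map (\<lambda>k. 1 - real (a k) - real j - real r) [1..<t+1]) 1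
       \<and> (r \<ge> 1 \<longrightarrow>
            real (c_iter r j n) / real (d_fun r n)
              = (\<Sum>i=0..j. (-1) ^ (j - i) * real (j choose i)
                   * (\<Prod>k=1..t. real ((a k + i + r - 1) choose i))
                   / real ((i + r - 1) choose i) ^ t)
          \<and> real (c_iter r j n) / real (d_fun r n)
              = (-1) ^ j * hypergeom (map (\<lambda>k. real (a k) + real r) [1..<t+1] @ [- real j])
                                    (replicate t (real r)) 1)"
proof -
  note dspec = d_fun_specific[OF assms(3,4,5,6)]
  have n0: "n > 0" by (rule dspec(1))
  have a1: "\<And>k. k \<in> {1..t} \<Longrightarrow> a k \<ge> 1" by (rule assms(5))
  define N where "N = j + r"
  have N1: "N \<ge> 1" using assms(1) by (simp add: N_def)
  define D where "D m = (\<Prod>k=1..t. real ((a k + m - 1) choose a k))" for m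
  have hd: "real (d_fun m n) = D m" for m using dspec(2)[of m] unfolding D_def by (simp del: of_nat_prod add: of_nat_prod[symmetric])
  have Dpos: "D m > 0" if "m \<ge> 1" for m
    unfolding D_def using a1 that by (intro prod_pos) auto
  have hc: "real (c_iter r j n) = (-1)^j * (\<Sum>i\<le>j. (-1)^i * real (j choose i) * D (i + r))"
    using c_iter_formula[OF n0] by (simp add: hd)
  have card: "card {1..t} = t" by simp

  have cA: "real (c_iter r j n) = (\<Sum>i=0..j. (-1)^i * real (j choose i) * D (N - i))"
  proof -
    have "real (c_iter r j n) = (-1)^j * (\<Sum>i=0..j. (-1)^i * real (j choose i) * D (i + r))"
      by (simp add: hc atLeast0AtMost)
    also have "(\<Sum>i=0..j. (-1)^i * real (j choose i) * D (i + r))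
        = (\<Sum>i=0..j. (-1)^(j - i) * real (j choose (j - i)) * D (j - i + r))"
      by (subst sum.atLeastAtMost_rev) simp
    also have "(-1)^j * \<dots> = (\<Sum>i=0..j. ((-1)^j * (-1)^(j - i)) * real (j choose (j - i)) * D (j - i + r))"
      by (simp add: sum_distrib_left mult.assoc)
    also have "\<dots> = (\<Sum>i=0..j. (-1)^i * real (j choose i) * D (N - i))"
    proof (intro sum.cong refl)
      fix i assume i: "i \<in> {0..j}"
      then have "j choose (j - i) = j choose i" by (simp add: binomial_symmetric[symmetric])
      moreover have "j - i + r = N - i" using i by (simp add: N_def)
      ultimately show "((-1)^j * (-1)^(j - i)) * real (j choose (j - i)) * D (j - i + r)
          = (-1)^i * real (j choose i) * D (N - i)" using sign1[of i j] i by simp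
    qed
    finally show ?thesis .
  qed
  have ratio1: "D (N - i) / D N = real ((N - 1) choose i) ^ t / (\<Prod>k=1..t. real ((a k + N - 1) choose i))"
    if i: "i \<le> j" for i
  proof -
    have "D (N - i) / D N = (\<Prod>k=1..t. real ((a k + (N - i) - 1) choose a k) / real ((a k + N - 1) choose a k))"
      unfolding D_def by (simp add: prod_dividef)
    also have "\<dots> = (\<Prod>k=1..t. real ((N - 1) choose i) / real ((a k + N - 1) choose i))"
      using i a1 N1 by (intro prod.cong refl real_ratio1) (auto simp: N_def)
    also have "\<dots> = real ((N - 1) choose i) ^ t / (\<Prod>k=1..t. real ((a k + N - 1) choose i))"
      by (simp add: prod_dividef card)
    finally show ?thesis .
  qed
  have E1: "real (c_iter r j n) / real (d_fun (j + r) n)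
           = (\<Sum>i=0..j. (-1) ^ i * real (j choose i) * real ((j + r - 1) choose i) ^ t
                 / (\<Prod>k=1..t. real ((a k + j + r - 1) choose i)))"
  proof -
    have "real (c_iter r j n) / real (d_fun (j + r) n) = (\<Sum>i=0..j. (-1)^i * real (j choose i) * (D (N - i) / D N))"
      by (simp add: hd cA N_def sum_divide_distrib)
    also have "\<dots> = (\<Sum>i=0..j. (-1) ^ i * real (j choose i) * real ((j + r - 1) choose i) ^ t
                 / (\<Prod>k=1..t. real ((a k + j + r - 1) choose i)))"
    proof (intro sum.cong refl)
      fix i assume i: "i \<in> {0..j}"
      have e: "a k + j + r - 1 = a k + N - 1" for k by (simp add: N_def)
      show "(-1)^i * real (j choose i) * (D (N - i) / D N) = (-1) ^ i * real (j choose i) * real ((j + r - 1) choose i) ^ t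
                 / (\<Prod>k=1..t. real ((a k + j + r - 1) choose i))"
        unfolding e using ratio1[of i] i by (simp add: N_def)
    qed
    finally show ?thesis .
  qed
  have cB: "real (c_iter r j n) = (\<Sum>i=0..j. (-1)^(j - i) * real (j choose i) * D (i + r))"
  proof -
    have "real (c_iter r j n) = (\<Sum>i=0..j. ((-1)^j * (-1)^i) * real (j choose i) * D (i + r))"
      by (simp add: hc atLeast0AtMost sum_distrib_left mult.assoc)
    also have "\<dots> = (\<Sum>i=0..j. (-1)^(j - i) * real (j choose i) * D (i + r))"
      by (intro sum.cong refl) (simp add: sign2)
    finally show ?thesis .
  qed
  have E3: "r \<ge> 1 \<Longrightarrow> real (c_iter r j n) / real (d_fun r n)
              = (\<Sum>i=0..j. (-1) ^ (j - i) * real (j choose i)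
                   * (\<Prod>k=1..t. real ((a k + i + r - 1) choose i))
                   / real ((i + r - 1) choose i) ^ t)"
  proof -
    assume r1: "r \<ge> 1"
    have ratio2: "D (i + r) / D r = (\<Prod>k=1..t. real ((a k + i + r - 1) choose i)) / real ((i + r - 1) choose i) ^ t" for i
    proof -
      have "D (i + r) / D r = (\<Prod>k=1..t. real ((a k + (i + r) - 1) choose a k) / real ((a k + r - 1) choose a k))"
        unfolding D_def by (simp add: prod_dividef)
      also have "\<dots> = (\<Prod>k=1..t. real ((a k + i + r - 1) choose i) / real ((i + r - 1) choose i))"
        using r1 by (intro prod.cong refl real_ratio2)
      also have "\<dots> = (\<Prod>k=1..t. real ((a k + i + r - 1) choose i)) / real ((i + r - 1) choose i) ^ t"
        by (simp add: prod_dividef card)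
      finally show ?thesis .
    qed
    have "real (c_iter r j n) / real (d_fun r n) = (\<Sum>i=0..j. (-1)^(j - i) * real (j choose i) * (D (i + r) / D r))"
      by (simp add: hd cB sum_divide_distrib)
    also have "\<dots> = (\<Sum>i=0..j. (-1) ^ (j - i) * real (j choose i)
                   * (\<Prod>k=1..t. real ((a k + i + r - 1) choose i))
                   / real ((i + r - 1) choose i) ^ t)"
      by (intro sum.cong refl) (simp only: ratio2 times_divide_eq_right)
    finally show ?thesis .
  qed
  have pj0: "pochhammer (- real j) i = 0" if "i > j" for i
    using that by (subst pochhammer_eq_0_iff) auto
  have pj: "pochhammer (- real j) i = (-1)^i * fact i * real (j choose i)" for i
    by (rule poch_neg)
  have E2: "real (c_iter r j n) / real (d_fun (j + r) n)
           = hypergeom (replicate t (1 - real j - real r) @ [- real j])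
                       (map (\<lambda>k. 1 - real (a k) - real j - real r) [1..<t+1]) 1"
  proof -
    define T where "T i = (\<Prod>x\<leftarrow>replicate t (1 - real j - real r) @ [- real j]. pochhammer x i) * 1 ^ i /
        ((\<Prod>x\<leftarrow>map (\<lambda>k. 1 - real (a k) - real j - real r) [1..<t+1]. pochhammer x i) * fact i)" for i
    have T1: "T i = pochhammer (1 - real j - real r) i ^ t * pochhammer (- real j) i
         / ((\<Prod>k=1..t. pochhammer (1 - real (a k) - real j - real r) i) * fact i)" for i
      unfolding T_def map_map prod_list_upt_real by (simp add: o_def)
    have "hypergeom (replicate t (1 - real j - real r) @ [- real j])
                       (map (\<lambda>k. 1 - real (a k) - real j - real r) [1..<t+1]) 1 = suminf T"
      unfolding hypergeom_def T_def by simp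
    also have "\<dots> = (\<Sum>i=0..j. T i)"
      by (subst suminf_finite[of "{0..j}"]) (auto simp: T1 pj0)
    also have "\<dots> = (\<Sum>i=0..j. (-1) ^ i * real (j choose i) * real ((j + r - 1) choose i) ^ t
                 / (\<Prod>k=1..t. real ((a k + j + r - 1) choose i)))"
    proof (intro sum.cong refl)
      fix i assume i: "i \<in> {0..j}"
      define X :: real where "X = (-1)^i * fact i"
      have X0: "X \<noteq> 0" by (simp add: X_def)
      have e1: "1 - real j - real r = - real (j + r - 1)" using assms(1) by (simp add: of_nat_diff)
      have e2: "1 - real (a k) - real j - real r = - real (a k + j + r - 1)" if "k \<in> {1..t}" for k
        using a1[OF that] by (simp add: of_nat_diff)
      have P: "(\<Prod>k=1..t. pochhammer (1 - real (a k) - real j - real r) i)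
           = X ^ t * (\<Prod>k=1..t. real ((a k + j + r - 1) choose i))"
      proof -
        have "(\<Prod>k=1..t. pochhammer (1 - real (a k) - real j - real r) i)
            = (\<Prod>k=1..t. X * real ((a k + j + r - 1) choose i))"
          by (intro prod.cong refl) (simp add: e2 poch_neg X_def)
        also have "\<dots> = X ^ t * (\<Prod>k=1..t. real ((a k + j + r - 1) choose i))"
          by (simp add: prod.distrib card)
        finally show ?thesis .
      qed
      have Q0: "(\<Prod>k=1..t. real ((a k + j + r - 1) choose i)) \<noteq> 0"
        using i a1 by (subst prod_zero_iff) force+
      have "T i = (X * real ((j + r - 1) choose i)) ^ t * (X * real (j choose i))
         / ((X ^ t * (\<Prod>k=1..t. real ((a k + j + r - 1) choose i))) * fact i)"
        unfolding T1 P e1 poch_neg X_def pj by (simp add: mult.assoc)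
      also have "\<dots> = (-1) ^ i * real (j choose i) * real ((j + r - 1) choose i) ^ t
                 / (\<Prod>k=1..t. real ((a k + j + r - 1) choose i))"
        using X0 Q0 by (simp add: X_def field_simps power_mult_distrib)
      finally show "T i = \<dots>" .
    qed
    finally show ?thesis using E1 by simp
  qed
  have E4: "r \<ge> 1 \<Longrightarrow> real (c_iter r j n) / real (d_fun r n)
              = (-1) ^ j * hypergeom (map (\<lambda>k. real (a k) + real r) [1..<t+1] @ [- real j])
                                    (replicate t (real r)) 1"
  proof -
    assume r1: "r \<ge> 1"
    define T where "T i = (\<Prod>x\<leftarrow>map (\<lambda>k. real (a k) + real r) [1..<t+1] @ [- real j]. pochhammer x i) * 1 ^ i /
        ((\<Prod>x\<leftarrow>replicate t (real r). pochhammer x i) * fact i)" for i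
    have T1: "T i = (\<Prod>k=1..t. pochhammer (real (a k) + real r) i) * pochhammer (- real j) i
         / (pochhammer (real r) i ^ t * fact i)" for i
      unfolding T_def map_append prod_list.append map_map prod_list_upt_real by (simp add: o_def)
    have "hypergeom (map (\<lambda>k. real (a k) + real r) [1..<t+1] @ [- real j]) (replicate t (real r)) 1 = suminf T"
      unfolding hypergeom_def T_def by simp
    also have "\<dots> = (\<Sum>i=0..j. T i)"
      by (subst suminf_finite[of "{0..j}"]) (auto simp: T1 pj0)
    finally have H: "hypergeom (map (\<lambda>k. real (a k) + real r) [1..<t+1] @ [- real j]) (replicate t (real r)) 1
       = (\<Sum>i=0..j. T i)" .
    have "(-1)^j * (\<Sum>i=0..j. T i) = (\<Sum>i=0..j. (-1) ^ (j - i) * real (j choose i)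
                   * (\<Prod>k=1..t. real ((a k + i + r - 1) choose i))
                   / real ((i + r - 1) choose i) ^ t)"
      unfolding sum_distrib_left
    proof (intro sum.cong refl)
      fix i assume i: "i \<in> {0..j}"
      define F :: real where "F = fact i"
      have F0: "F \<noteq> 0" by (simp add: F_def)
      have R0: "real ((i + r - 1) choose i) \<noteq> 0" using r1 by simp
      have pr: "pochhammer (real r) i = F * real ((i + r - 1) choose i)"
        using poch_pos[OF r1, of i] by (simp add: F_def add.commute)
      have pa: "pochhammer (real (a k) + real r) i = F * real ((a k + i + r - 1) choose i)" for k
      proof -
        have "pochhammer (real (a k + r)) i = F * real ((a k + r + i - 1) choose i)"
          using poch_pos[of "a k + r" i] r1 by (simp add: F_def)
        moreover have "a k + r + i - 1 = a k + i + r - 1" by simp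
        ultimately show ?thesis by simp
      qed
      have P: "(\<Prod>k=1..t. pochhammer (real (a k) + real r) i) = F ^ t * (\<Prod>k=1..t. real ((a k + i + r - 1) choose i))"
        by (simp add: pa prod.distrib card)
      have "T i = F ^ t * (\<Prod>k=1..t. real ((a k + i + r - 1) choose i)) * ((-1)^i * F * real (j choose i))
          / ((F * real ((i + r - 1) choose i)) ^ t * F)"
        unfolding T1 P pr pj F_def by simp
      also have "\<dots> = (-1)^i * real (j choose i) * (\<Prod>k=1..t. real ((a k + i + r - 1) choose i))
          / real ((i + r - 1) choose i) ^ t"
        using F0 R0 by (simp add: field_simps power_mult_distrib)
      finally have "(-1)^j * T i = ((-1)^j * (-1)^i) * real (j choose i) * (\<Prod>k=1..t. real ((a k + i + r - 1) choose i))
          / real ((i + r - 1) choose i) ^ t" by simp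
      then show "(-1)^j * T i = (-1) ^ (j - i) * real (j choose i)
                   * (\<Prod>k=1..t. real ((a k + i + r - 1) choose i))
                   / real ((i + r - 1) choose i) ^ t"
        using sign2[of i j] i by simp
    qed
    then show ?thesis using E3[OF r1] H by simp
  qed
  show ?thesis using E1 E2 E3 E4 by blast
qed


end
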